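(* Let $I$ and $J$ be compositions of $n$ and let $W'(I,J)$ be the set of packed words $w$ with $\mathrm{WC}(w)=I$ and $\mathrm{DC}(w)=J$. Then the coefficient $D_I^J(q)$ of $\Psi_I$ in $R_J(q)$ is \[ D_I^J(q)=\sum_{w\in W'(I,J)}q^{\mathrm{sinv}(w)}. \]
   Context: Compositions: $I=(i_1,\dots,i_r)$ positive integers with sum $n$; $\ell(I)=r$; $\mathrm{Des}(I)$ the set of partial sums other than $n$; $J\succeq I$ ($J$ coarser) iff $\mathrm{Des}(J)\subseteq\mathrm{Des}(I)$. Over $\mathbb K(q)$ ($\mathrm{char}\,\mathbb K=0$): packed words are words with letter set $\{1,\dots,m\}$; $\mathrm{pack}$ replaces the $t$-th smallest letter by $t$. For a packed word $w=w_1\cdots w_n$: $\mathrm{DC}(w)$ is the composition of $n$ with descent set $\{i:w_i>w_{i+1}\}$; $\mathrm{WC}(w)$ is the composition of $n$ whose descent set is the set of positions $p<n$ with $w_p$ not occurring in $w_{p+1}\cdots w_n$; $\mathrm{sinv}(w)=\#\{i<j:w_i>w_j,\ w_j\text{ not occurring in }w_{j+1}\cdots w_n\}$. $\mathbf{WQSym}$ has basis $\mathbf M_u$ with $\mathbf M_{u'}\mathbf M_{u''}=\sum\mathbf M_u$ over packed $u=v\cdot w$ with $\mathrm{pack}(v)=u'$, $\mathrm{pack}(w)=u''$; $\mathbf M_{u'}\star_q\mathbf M_{u''}=\sum q^{\mathrm{sinv}(u)-\mathrm{sinv}(u')-\mathrm{sinv}(u'')}\mathbf M_u$ (associative). $\mathbf{Sym}$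 is the quotient by the span of $\mathbf M_u-\mathbf M_v$ with $\mathrm{WC}(u)=\mathrm{WC}(v)$, $\zeta$ the quotient map, $\Psi_I=\zeta(\mathbf M_u)$ for $\mathrm{WC}(u)=I$ (a basis). $\tilde S_m=\sum\mathbf M_u$ over nondecreasing packed $u$ of length $m$; $S^J(q)=\zeta(\tilde S_{j_1}\star_q\cdots\star_q\tilde S_{j_l})$; $R_I(q)=\sum_{J\succeq I}(-1)^{\ell(J)-\ell(I)}S^J(q)$. *)

theory Defs
  imports Main "HOL-Computational_Algebra.Polynomial" "HOL-Computational_Algebra.Fraction_Field"
begin

definition is_comp :: "nat \<Rightarrow> nat list \<Rightarrow> bool" where
  "is_comp n I \<longleftrightarrow> (\<forall>x\<in>set I. 0 < x) \<and> sum_list I = n"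

definition Des :: "nat list \<Rightarrow> nat set" where
  "Des I = {sum_list (take k I) | k. 0 < k \<and> k < length I}"

definition comp_of_set :: "nat \<Rightarrow> nat set \<Rightarrow> nat list" where
  "comp_of_set n D = (THE I. is_comp n I \<and> Des I = D)"

definition coarser :: "nat list \<Rightarrow> nat list \<Rightarrow> bool" where
  "coarser J I \<longleftrightarrow> Des J \<subseteq> Des I"

definition packed :: "nat list \<Rightarrow> bool" where
  "packed w \<longleftrightarrow> set w = {1..card (set w)}"

definition pack :: "nat list \<Rightarrow> nat list" where
  "pack w = map (\<lambda>x. card {y \<in> set w. y \<le> x}) w"

(* positions are 1-indexed: w_p = w ! (p - 1) *)
definition DC :: "nat list \<Rightarrow> nat list" where
  "DC w = comp_of_set (length w)
     {p. 1 \<le> p \<and> p < length w \<and> w ! (p - 1) > w ! p}"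

definition WC :: "nat list \<Rightarrow> nat list" where
  "WC w = comp_of_set (length w)
     {p. 1 \<le> p \<and> p < length w \<and> w ! (p - 1) \<notin> set (drop p w)}"

definition sinv :: "nat list \<Rightarrow> nat" where
  "sinv w = card {(i, j). i < j \<and> j < length w \<and> w ! i > w ! j
                         \<and> w ! j \<notin> set (drop (Suc j) w)}"

definition qX :: "'k::field_char_0 poly fract" where
  "qX = Fract [:0, 1:] 1"

(* elements of WQSym over K(q): coefficient functions u \<mapsto> coefficient of M_u
   (only values at packed words matter) *)
type_synonym 'k wqsym = "nat list \<Rightarrow> 'k poly fract"

(* bilinear extension of the q-product M_u' *_q M_u'' *)
definition qprod :: "'k::field_char_0 wqsym \<Rightarrow> 'k wqsym \<Rightarrow> 'k wqsym" where
  "qprod f g u = (if packed u then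
     (\<Sum>k\<in>{0..length u}. f (pack (take k u)) * g (pack (drop k u)) *
        qX powi (int (sinv u) - int (sinv (pack (take k u))) - int (sinv (pack (drop k u)))))
   else 0)"

definition wunit :: "'k::field_char_0 wqsym" where
  "wunit u = (if u = [] then 1 else 0)"

definition Stilde :: "nat \<Rightarrow> 'k::field_char_0 wqsym" where
  "Stilde m u = (if packed u \<and> length u = m \<and> sorted u then 1 else 0)"

(* coefficient of Psi_I in zeta(f): Psi_I = zeta(M_u) for every packed u with WC(u) = I *)
definition Psi_coeff :: "nat list \<Rightarrow> 'k::field_char_0 wqsym \<Rightarrow> 'k poly fract" where
  "Psi_coeff I f = (\<Sum>u\<in>{u. packed u \<and> length u = sum_list I \<and> WC u = I}. f u)"

(* \<tilde>S_{j1} *_q ... *_q \<tilde>S_{jl}, whose image under zeta is S^J(q) *)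
definition SJ_lift :: "nat list \<Rightarrow> 'k::field_char_0 wqsym" where
  "SJ_lift J = foldr (\<lambda>j acc. qprod (Stilde j) acc) J wunit"

(* coefficient of Psi_I in R_J(q) = sum_{K \<succeq> J} (-1)^(l(J)-l(K)) S^K(q) *)
definition R_coeff :: "nat list \<Rightarrow> nat list \<Rightarrow> 'k::field_char_0 poly fract" where
  "R_coeff I J = (\<Sum>K\<in>{K. is_comp (sum_list J) K \<and> coarser K J}.
      (-1) ^ (length J - length K) * Psi_coeff I (SJ_lift K :: 'k wqsym))"

definition Wprime :: "nat list \<Rightarrow> nat list \<Rightarrow> nat list set" where
  "Wprime I J = {w. packed w \<and> WC w = I \<and> DC w = J}"

end

theory Submission
  imports Defs
begin


definition packf :: "nat list \<Rightarrow> nat \<Rightarrow> nat" where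
  "packf w x = card {y \<in> set w. y \<le> x}"

lemma pack_map: "pack w = map (packf w) w"
  by (simp add: pack_def packf_def)

lemma packf_less:
  assumes "x \<in> set w" "x' \<in> set w" "x < x'"
  shows "packf w x < packf w x'"
  unfolding packf_def
proof (rule psubset_card_mono)
  show "finite {y \<in> set w. y \<le> x'}" by simp
  have "x' \<in> {y \<in> set w. y \<le> x'}" "x' \<notin> {y \<in> set w. y \<le> x}" using assms by auto
  moreover have "{y \<in> set w. y \<le> x} \<subseteq> {y \<in> set w. y \<le> x'}" using assms by auto
  ultimately show "{y \<in> set w. y \<le> x} \<subset> {y \<in> set w. y \<le> x'}" by blast
qed

lemma packf_le_iff:
  assumes "x \<in> set w" "x' \<in> set w"
  shows "packf w x \<le> packf w x' \<longleftrightarrow> x \<le> x'"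
  using packf_less[OF assms] packf_less[OF assms(2,1)] by (cases "x < x'"; cases "x' < x"; auto)

lemma packf_less_iff:
  assumes "x \<in> set w" "x' \<in> set w"
  shows "packf w x < packf w x' \<longleftrightarrow> x < x'"
  using packf_le_iff[OF assms(2,1)] by auto

lemma packf_range:
  assumes "x \<in> set w"
  shows "packf w x \<in> {1..card (set w)}"
proof -
  have "x \<in> {y \<in> set w. y \<le> x}" using assms by auto
  hence "0 < card {y \<in> set w. y \<le> x}" by (subst card_gt_0_iff) auto
  hence "1 \<le> packf w x" unfolding packf_def by simp
  moreover have "packf w x \<le> card (set w)" unfolding packf_def by (rule card_mono) auto
  ultimately show ?thesis by auto
qed

lemma packed_pack: "packed (pack w)"
proof -
  have inj: "inj_on (packf w) (set w)"
  proof (rule inj_onI)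
    fix x y assume xy: "x \<in> set w" "y \<in> set w" "packf w x = packf w y"
    show "x = y" using packf_less[of x w y] packf_less[of y w x] xy
      by (cases x y rule: linorder_cases) auto
  qed
  have sub: "packf w ` set w \<subseteq> {1..card (set w)}" using packf_range by auto
  have c: "card (packf w ` set w) = card (set w)" using card_image[OF inj] .
  have eq: "packf w ` set w = {1..card (set w)}"
    by (rule card_subset_eq[OF _ sub]) (simp_all add: c)
  show ?thesis unfolding packed_def pack_map using eq c by simp
qed

lemma length_pack[simp]: "length (pack w) = length w"
  by (simp add: pack_def)

lemma sorted_map_iff:
  assumes "\<And>x y. x \<in> set w \<Longrightarrow> y \<in> set w \<Longrightarrow> f x \<le> f y \<longleftrightarrow> x \<le> y"
  shows "sorted (map (f::nat\<Rightarrow>nat) w) \<longleftrightarrow> sorted w"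
  using assms by (simp add: sorted_iff_nth_mono)

lemma sorted_pack: "sorted (pack w) \<longleftrightarrow> sorted w"
  unfolding pack_map by (rule sorted_map_iff) (simp add: packf_le_iff)

lemma sinv_sorted: "sorted w \<Longrightarrow> sinv w = 0"
proof -
  assume s: "sorted w"
  have nl: "\<not> (w!j < w!i)" if "i<j" "j < length w" for i j
    using sorted_nth_mono[OF s, of i j] that by simp
  hence E: "{(i, j). i < j \<and> j < length w \<and> w ! i > w ! j
                         \<and> w ! j \<notin> set (drop (Suc j) w)} = {}"
    by blast
  show ?thesis unfolding sinv_def E by simp
qed



fun bs :: "nat list \<Rightarrow> nat list \<Rightarrow> bool" where
  "bs [] u = (u = [])"
| "bs (j#K) u = (sorted (take j u) \<and> bs K (drop j u))"

lemma bs_map: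
  assumes "\<And>x y. x \<in> set u \<Longrightarrow> y \<in> set u \<Longrightarrow> f x \<le> f y \<longleftrightarrow> x \<le> y"
  shows "bs K (map (f::nat\<Rightarrow>nat) u) = bs K u"
  using assms
proof (induction K arbitrary: u)
  case Nil then show ?case by simp
next
  case (Cons j K)
  have "sorted (map f (take j u)) = sorted (take j u)"
    by (rule sorted_map_iff) (rule Cons.prems[OF in_set_takeD in_set_takeD])
  moreover have "bs K (map f (drop j u)) = bs K (drop j u)"
    by (rule Cons.IH) (rule Cons.prems[OF in_set_dropD in_set_dropD])
  ultimately show ?case by (simp add: take_map drop_map)
qed

lemma bs_pack: "bs K (pack u) = bs K u"
  unfolding pack_map by (rule bs_map) (rule packf_le_iff)

lemma sinv_Nil[simp]: "sinv [] = 0"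
  by (simp add: sinv_def)

lemma qX_nz: "(qX :: 'k::field_char_0 poly fract) \<noteq> 0"
  by (simp add: qX_def Zero_fract_def eq_fract)

lemma SJ_lift_eq:
  "(SJ_lift K :: 'k::field_char_0 wqsym) u =
     (if packed u \<and> length u = sum_list K \<and> bs K u then (qX :: 'k poly fract) ^ sinv u else 0)"
proof (induction K arbitrary: u)
  case Nil
  show ?case by (simp add: SJ_lift_def wunit_def packed_def)
next
  case (Cons j K)
  have S: "(SJ_lift (j#K) :: 'k wqsym) u = qprod (Stilde j) (SJ_lift K :: 'k wqsym) u"
    by (simp add: SJ_lift_def)
  show ?case
  proof (cases "packed u")
    case False then show ?thesis by (simp add: S qprod_def)
  next
    case pk: True
    define T where "T k = (Stilde j (pack (take k u)) * (SJ_lift K :: 'k wqsym) (pack (drop k u)) *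
        (qX :: 'k poly fract) powi (int (sinv u) - int (sinv (pack (take k u))) - int (sinv (pack (drop k u)))))" for k
    have Q: "qprod (Stilde j) (SJ_lift K :: 'k wqsym) u = (\<Sum>k\<in>{0..length u}. T k)"
      using pk by (simp add: qprod_def T_def)
    have Tz: "T k = 0" if "k \<le> length u" "k \<noteq> j" for k
      using that by (simp add: T_def Stilde_def)
    show ?thesis
    proof (cases "j \<le> length u")
      case False
      have "(\<Sum>k\<in>{0..length u}. T k) = 0"
        by (rule sum.neutral) (use False Tz in auto)
      then show ?thesis using False by (simp add: S Q)
    next
      case jl: True
      have "(\<Sum>k\<in>{0..length u}. T k) = (\<Sum>k\<in>{0..length u}. if k = j then T j else 0)"
        by (rule sum.cong) (use Tz in auto)
      also have "\<dots> = T j" using jl by simp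
      finally have SJ: "(SJ_lift (j#K) :: 'k wqsym) u = T j" by (simp add: S Q)
      have St: "Stilde j (pack (take j u)) = (if sorted (take j u) then 1 else 0)"
        using jl by (simp add: Stilde_def packed_pack sorted_pack)
      have IH: "(SJ_lift K :: 'k wqsym) (pack (drop j u)) =
          (if length u - j = sum_list K \<and> bs K (drop j u) then (qX :: 'k poly fract) ^ sinv (pack (drop j u)) else 0)"
        using Cons.IH[of "pack (drop j u)"] by (simp add: packed_pack bs_pack)
      show ?thesis
      proof (cases "sorted (take j u) \<and> length u - j = sum_list K \<and> bs K (drop j u)")
        case False
        then show ?thesis using jl pk by (auto simp: SJ T_def St IH)
      next
        case True
        have s0: "sinv (pack (take j u)) = 0" using True by (simp add: sinv_sorted sorted_pack)
        have "T j = qX ^ sinv (pack (drop j u)) * (qX :: 'k poly fract) powi (int (sinv u) - int (sinv (pack (drop j u))))"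
          using True by (simp add: T_def St IH s0)
        also have "\<dots> = qX ^ sinv u"
          by (simp add: power_int_diff qX_nz)
        finally show ?thesis using True jl pk SJ by auto
      qed
    qed
  qed
qed



lemma pos_sum: "(\<forall>x\<in>set xs. 0 < (x::nat)) \<Longrightarrow> xs \<noteq> [] \<Longrightarrow> 0 < sum_list xs"
  by (cases xs) auto

lemma Des_Cons': "Des (j#K) = {j + sum_list (take k K) | k. k < length K}"
proof -
  have "x \<in> Des (j#K) \<longleftrightarrow> (\<exists>k. k < length K \<and> x = j + sum_list (take k K))" for x
  proof
    assume "x \<in> Des (j#K)"
    then obtain k where k: "0 < k" "k < Suc (length K)" "x = sum_list (take k (j#K))"
      unfolding Des_def by auto
    then obtain k' where "k = Suc k'" by (cases k) auto
    thus "\<exists>k. k < length K \<and> x = j + sum_list (take k K)" using k by auto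
  next
    assume "\<exists>k. k < length K \<and> x = j + sum_list (take k K)"
    then obtain k where k: "k < length K" "x = j + sum_list (take k K)" by blast
    hence "x = sum_list (take (Suc k) (j#K))" by simp
    thus "x \<in> Des (j#K)" unfolding Des_def using k by force
  qed
  thus ?thesis by blast
qed

lemma Des_Cons: "Des (j#K) = (if K = [] then {} else insert j ((+) j ` Des K))"
proof (cases "K = []")
  case True then show ?thesis by (simp add: Des_Cons')
next
  case False
  have "x \<in> Des (j#K) \<longleftrightarrow> x \<in> insert j ((+) j ` Des K)" for x
  proof
    assume "x \<in> Des (j#K)"
    then obtain k where k: "k < length K" "x = j + sum_list (take k K)" using Des_Cons' by blast
    show "x \<in> insert j ((+) j ` Des K)"
    proof (cases "k = 0")
      case True then show ?thesis using k by simp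
    next
      case False
      hence "sum_list (take k K) \<in> Des K" using k unfolding Des_def by auto
      thus ?thesis using k by auto
    qed
  next
    assume "x \<in> insert j ((+) j ` Des K)"
    then consider "x = j" | y where "y \<in> Des K" "x = j + y" by auto
    then show "x \<in> Des (j#K)"
    proof cases
      case 1
      have "x = j + sum_list (take 0 K)" "0 < length K" using 1 False by auto
      then show ?thesis unfolding Des_Cons' by blast
    next
      case 2
      then obtain k where "0 < k" "k < length K" "y = sum_list (take k K)" unfolding Des_def by auto
      then show ?thesis unfolding Des_Cons' using 2 by blast
    qed
  qed
  hence "Des (j#K) = insert j ((+) j ` Des K)" by blast
  then show ?thesis using False by simp
qed

lemma Des_Nil[simp]: "Des [] = {}" by (simp add: Des_def)

lemma Des_image: "Des K = (\<lambda>k. sum_list (take k K)) ` {0<..<length K}"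
  unfolding Des_def by auto

lemma finite_Des[simp]: "finite (Des K)"
  unfolding Des_image by simp

lemma Des_sub:
  assumes "is_comp n K"
  shows "Des K \<subseteq> {1..<n}"
proof
  fix x assume "x \<in> Des K"
  then obtain k where k: "0 < k" "k < length K" "x = sum_list (take k K)" unfolding Des_def by auto
  have pos: "\<forall>x\<in>set K. 0 < x" using assms by (simp add: is_comp_def)
  have "0 < sum_list (take k K)"
    by (rule pos_sum) (use pos k in \<open>auto dest: in_set_takeD\<close>)
  moreover have "0 < sum_list (drop k K)"
    by (rule pos_sum) (use pos k in \<open>auto dest: in_set_dropD\<close>)
  moreover have "n = sum_list (take k K) + sum_list (drop k K)"
    using assms by (simp add: is_comp_def flip: sum_list_append)
  ultimately show "x \<in> {1..<n}" using k by auto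
qed

lemma card_Des:
  assumes "\<forall>x\<in>set K. 0 < x"
  shows "card (Des K) = length K - 1"
  using assms
proof (induction K)
  case Nil then show ?case by simp
next
  case (Cons j K)
  show ?case
  proof (cases "K = []")
    case True then show ?thesis by (simp add: Des_Cons)
  next
    case False
    have "Des K \<subseteq> {1..<sum_list K}" by (rule Des_sub) (use Cons.prems in \<open>simp add: is_comp_def\<close>)
    hence "j \<notin> (+) j ` Des K" by auto
    moreover have "card ((+) j ` Des K) = card (Des K)" by (rule card_image) simp
    ultimately have "card (Des (j#K)) = Suc (card (Des K))" using False by (simp add: Des_Cons)
    then show ?thesis using Cons False by (cases K) auto
  qed
qed

lemma comp_exists:
  "D \<subseteq> {1..<n} \<Longrightarrow> \<exists>K. is_comp n K \<and> Des K = D"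
proof (induction n arbitrary: D rule: less_induct)
  case (less n)
  show ?case
  proof (cases "D = {}")
    case True
    show ?thesis
    proof (cases "n = 0")
      case True then show ?thesis using \<open>D = {}\<close> by (intro exI[of _ "[]"]) (simp add: is_comp_def)
    next
      case False then show ?thesis using \<open>D = {}\<close> by (intro exI[of _ "[n]"]) (simp add: is_comp_def Des_Cons)
    qed
  next
    case False
    define m where "m = Min D"
    have fin: "finite D" using less.prems finite_subset by blast
    have mD: "m \<in> D" using Min_in[OF fin False] m_def by simp
    have mle: "\<And>x. x \<in> D \<Longrightarrow> m \<le> x" using Min_le[OF fin] m_def by simp
    have m1: "1 \<le> m" "m < n" using mD less.prems by auto
    define D' where "D' = (\<lambda>x. x - m) ` (D - {m})"
    have D'sub: "D' \<subseteq> {1..<n - m}"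
    proof
      fix y assume "y \<in> D'"
      then obtain x where x: "x \<in> D" "x \<noteq> m" "y = x - m" unfolding D'_def by auto
      have "m \<le> x" using mle x by simp
      moreover have "x < n" using x less.prems by auto
      ultimately show "y \<in> {1..<n - m}" using x by auto
    qed
    obtain K' where K': "is_comp (n - m) K'" "Des K' = D'"
      using less.IH[OF _ D'sub] m1 by auto
    have "K' \<noteq> []" using K' m1 by (auto simp: is_comp_def)
    have "Des (m # K') = insert m ((+) m ` D')" using \<open>K' \<noteq> []\<close> K' by (simp add: Des_Cons)
    also have "(+) m ` D' = D - {m}"
    proof -
      have "(+) m ` D' = (\<lambda>x. m + (x - m)) ` (D - {m})" unfolding D'_def by (simp add: image_image)
      also have "\<dots> = (\<lambda>x. x) ` (D - {m})" by (rule image_cong) (use mle in auto)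
      finally show ?thesis by simp
    qed
    also have "insert m (D - {m}) = D" using mD by auto
    finally have "Des (m # K') = D" .
    moreover have "is_comp n (m # K')" using K' m1 by (auto simp: is_comp_def)
    ultimately show ?thesis by blast
  qed
qed

lemma comp_unique:
  "is_comp n I \<Longrightarrow> is_comp n J \<Longrightarrow> Des I = Des J \<Longrightarrow> I = J"
proof (induction I arbitrary: n J)
  case Nil
  then have "n = 0" by (simp add: is_comp_def)
  then show ?case using Nil by (cases J) (auto simp: is_comp_def)
next
  case (Cons a I)
  have pa: "0 < a" and pI: "\<forall>x\<in>set I. 0 < x" using Cons.prems by (auto simp: is_comp_def)
  obtain b J' where J: "J = b # J'"
    using Cons.prems pa by (cases J) (auto simp: is_comp_def)
  have pb: "0 < b" and pJ: "\<forall>x\<in>set J'. 0 < x" using Cons.prems J by (auto simp: is_comp_def)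
  show ?case
  proof (cases "I = []")
    case True
    then have "Des J = {}" using Cons.prems by (simp add: Des_Cons)
    hence "J' = []" using J by (auto simp: Des_Cons split: if_splits)
    then show ?thesis using True Cons.prems J by (simp add: is_comp_def)
  next
    case False
    hence "J' \<noteq> []" using Cons.prems J by (auto simp: Des_Cons split: if_splits)
    have DI: "Des I \<subseteq> {1..<sum_list I}" by (rule Des_sub) (simp add: is_comp_def pI)
    have DJ: "Des J' \<subseteq> {1..<sum_list J'}" by (rule Des_sub) (simp add: is_comp_def pJ)
    have E: "insert a ((+) a ` Des I) = insert b ((+) b ` Des J')"
      using Cons.prems J False \<open>J' \<noteq> []\<close> by (simp add: Des_Cons)
    have "a = b"
    proof (rule ccontr)
      assume ab: "a \<noteq> b"
      have "a \<in> insert b ((+) b ` Des J')" "b \<in> insert a ((+) a ` Des I)" using E by blast+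
      hence "a \<in> (+) b ` Des J'" "b \<in> (+) a ` Des I" using ab by auto
      thus False using DI DJ by auto
    qed
    have "(+) a ` Des I = (+) a ` Des J'"
    proof -
      have "a \<notin> (+) a ` Des I" "a \<notin> (+) a ` Des J'" using DI DJ by auto
      thus ?thesis using E \<open>a = b\<close> by (metis insert_ident)
    qed
    hence "Des I = Des J'" by (simp add: inj_image_eq_iff)
    moreover have "is_comp (n - a) I" "is_comp (n - a) J'"
      using Cons.prems J \<open>a = b\<close> by (auto simp: is_comp_def)
    ultimately have "I = J'" using Cons.IH by blast
    then show ?thesis using J \<open>a = b\<close> by simp
  qed
qed

lemma comp_of_set_props:
  assumes "D \<subseteq> {1..<n}"
  shows "is_comp n (comp_of_set n D) \<and> Des (comp_of_set n D) = D"
proof -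
  have "\<exists>!K. is_comp n K \<and> Des K = D"
    using comp_exists[OF assms] comp_unique by blast
  thus ?thesis unfolding comp_of_set_def by (rule theI')
qed

lemma comp_of_set_Des:
  assumes "is_comp n K"
  shows "comp_of_set n (Des K) = K"
  unfolding comp_of_set_def
  by (rule the_equality) (use assms comp_unique in auto)



definition descset :: "nat list \<Rightarrow> nat set" where
  "descset w = {p. 1 \<le> p \<and> p < length w \<and> w ! (p - 1) > w ! p}"

lemma DC_descset: "DC w = comp_of_set (length w) (descset w)"
  by (simp add: DC_def descset_def)

lemma descset_sub: "descset w \<subseteq> {1..<length w}"
  by (auto simp: descset_def)

lemma descset_drop:
  assumes "j \<le> length u"
  shows "x \<in> descset (drop j u) \<longleftrightarrow> 1 \<le> x \<and> j + x \<in> descset u"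
proof (cases "1 \<le> x")
  case True
  then have "j + x - 1 = j + (x - 1)" by simp
  then show ?thesis using True assms by (auto simp: descset_def)
next
  case False then show ?thesis by (simp add: descset_def)
qed

lemma sorted_take_iff:
  assumes "j \<le> length u"
  shows "sorted (take j u) \<longleftrightarrow> (\<forall>p. 1 \<le> p \<and> p < j \<longrightarrow> p \<notin> descset u)"
proof -
  have "sorted (take j u) \<longleftrightarrow> (\<forall>i. Suc i < j \<longrightarrow> u ! i \<le> u ! Suc i)"
    using assms by (simp add: sorted_iff_nth_Suc min_def)
  also have "\<dots> \<longleftrightarrow> (\<forall>p. 1 \<le> p \<and> p < j \<longrightarrow> p \<notin> descset u)"
  proof
    assume H: "\<forall>i. Suc i < j \<longrightarrow> u ! i \<le> u ! Suc i"
    show "\<forall>p. 1 \<le> p \<and> p < j \<longrightarrow> p \<notin> descset u"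
    proof (intro allI impI)
      fix p assume p: "1 \<le> p \<and> p < j"
      then obtain i where "p = Suc i" by (cases p) auto
      then show "p \<notin> descset u" using H p by (auto simp: descset_def)
    qed
  next
    assume H: "\<forall>p. 1 \<le> p \<and> p < j \<longrightarrow> p \<notin> descset u"
    show "\<forall>i. Suc i < j \<longrightarrow> u ! i \<le> u ! Suc i"
    proof (intro allI impI)
      fix i assume i: "Suc i < j"
      then have "Suc i \<notin> descset u" using H by auto
      then show "u ! i \<le> u ! Suc i" using i assms by (auto simp: descset_def)
    qed
  qed
  finally show ?thesis .
qed

lemma bs_descset:
  assumes "\<forall>x\<in>set K. 0 < x" "length u = sum_list K"
  shows "bs K u \<longleftrightarrow> descset u \<subseteq> Des K"
  using assms
proof (induction K arbitrary: u)
  case Nil then show ?case by (simp add: descset_def)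
next
  case (Cons j K)
  have jl: "j \<le> length u" using Cons.prems by simp
  have pK: "\<forall>x\<in>set K. 0 < x" using Cons.prems by simp
  have IH: "bs K (drop j u) \<longleftrightarrow> descset (drop j u) \<subseteq> Des K"
    by (rule Cons.IH) (use Cons.prems in simp_all)
  show ?case
  proof (cases "K = []")
    case True
    then have "length u = j" using Cons.prems by simp
    then have "sorted (take j u) \<longleftrightarrow> descset u = {}"
      using sorted_take_iff[OF jl] descset_sub[of u] by auto
    then show ?thesis using True \<open>length u = j\<close> by (simp add: Des_Cons)
  next
    case False
    have DK: "Des K \<subseteq> {1..<sum_list K}" by (rule Des_sub) (simp add: is_comp_def pK)
    have DE: "Des (j#K) = insert j ((+) j ` Des K)" using False by (simp add: Des_Cons)
    show ?thesis
    proof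
      assume "bs (j#K) u"
      then have s: "sorted (take j u)" and d: "descset (drop j u) \<subseteq> Des K" using IH by auto
      show "descset u \<subseteq> Des (j#K)"
      proof
        fix p assume p: "p \<in> descset u"
        have "\<not> p < j" using s p sorted_take_iff[OF jl] by (auto simp: descset_def)
        show "p \<in> Des (j#K)"
        proof (cases "p = j")
          case True then show ?thesis using DE by simp
        next
          case False
          then have "p - j \<in> descset (drop j u)" using \<open>\<not> p < j\<close> p descset_drop[OF jl, of "p - j"] by auto
          then have "p - j \<in> Des K" using d by blast
          then show ?thesis using DE \<open>\<not> p < j\<close> by (auto intro!: image_eqI[of p _ "p - j"])
        qed
      qed
    next
      assume H: "descset u \<subseteq> Des (j#K)"
      have s: "sorted (take j u)"
      proof -
        have "p \<notin> descset u" if "1 \<le> p" "p < j" for p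
        proof
          assume "p \<in> descset u"
          then have "p \<in> insert j ((+) j ` Des K)" using H DE by auto
          then show False using that by auto
        qed
        then show ?thesis using sorted_take_iff[OF jl] by auto
      qed
      have "descset (drop j u) \<subseteq> Des K"
      proof
        fix x assume x: "x \<in> descset (drop j u)"
        then have "1 \<le> x" "j + x \<in> descset u" using descset_drop[OF jl] by auto
        then have "j + x \<in> insert j ((+) j ` Des K)" using H DE by auto
        then show "x \<in> Des K" using \<open>1 \<le> x\<close> by auto
      qed
      then show "bs (j#K) u" using s IH by simp
    qed
  qed
qed



lemma mobius_indicator:
  assumes "finite B"
  shows "(\<Sum>T\<in>Pow B. (-1) ^ (card B - card T) * (if A \<subseteq> T then 1 else 0)) =
         (if A = B then (1::'a::comm_ring_1) else 0)"
proof -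
  have "(\<lambda>S. if S = A then (1::'a) else 0) B =
        (\<Sum>T\<in>Pow B. (-1) ^ (card B - card T) * (\<lambda>S. if A \<subseteq> S then 1 else 0) T)"
  proof (rule inclusion_exclusion_mobius[OF _ assms])
    fix S :: "'b set" assume "finite S"
    show "(if A \<subseteq> S then 1 else 0) = sum (\<lambda>S. if S = A then (1::'a) else 0) (Pow S)"
      using \<open>finite S\<close> by (simp add: sum.delta)
  qed
  thus ?thesis by (simp add: eq_commute)
qed

lemma comp_Nil_iff: "is_comp n K \<Longrightarrow> K = [] \<longleftrightarrow> n = 0"
  by (cases K) (auto simp: is_comp_def)

lemma finite_packed_len: "finite {u. packed u \<and> length u = n \<and> P u}"
proof (rule finite_subset)
  show "{u. packed u \<and> length u = n \<and> P u} \<subseteq> {xs. set xs \<subseteq> {1..n} \<and> length xs = n}"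
  proof
    fix u assume u: "u \<in> {u. packed u \<and> length u = n \<and> P u}"
    have "card (set u) \<le> n" using u card_length[of u] by auto
    moreover have "set u \<subseteq> {1..card (set u)}" using u by (simp add: packed_def)
    ultimately have "set u \<subseteq> {1..n}" by auto
    then show "u \<in> {xs. set xs \<subseteq> {1..n} \<and> length xs = n}" using u by auto
  qed
  show "finite {xs. set xs \<subseteq> {1..n} \<and> length xs = n}" by (rule finite_lists_length_eq) simp
qed

lemma WC_len:
  assumes "WC w = I"
  shows "sum_list I = length w"
proof -
  have "{p. 1 \<le> p \<and> p < length w \<and> w ! (p - 1) \<notin> set (drop p w)} \<subseteq> {1..<length w}" by auto
  from comp_of_set_props[OF this] show ?thesis using assms by (simp add: WC_def is_comp_def)
qed

theorem mainTheorem10: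
  fixes I J :: "nat list" and n :: nat
  assumes "is_comp n I" and "is_comp n J"
  shows "(R_coeff I J :: 'k::field_char_0 poly fract)
           = (\<Sum>w\<in>Wprime I J. (qX :: 'k poly fract) ^ sinv w)"
proof -
  define f :: "nat list \<Rightarrow> 'k poly fract" where "f u = qX ^ sinv u" for u
  define U where "U = {u. packed u \<and> length u = n \<and> WC u = I}"
  have finU: "finite U" unfolding U_def by (rule finite_packed_len)
  have sI: "sum_list I = n" and sJ: "sum_list J = n" using assms by (auto simp: is_comp_def)
  have DJ: "Des J \<subseteq> {1..<n}" by (rule Des_sub[OF assms(2)])
  have finDJ: "finite (Des J)" by simp
  have step1: "Psi_coeff I (SJ_lift K :: 'k wqsym) = (\<Sum>u\<in>U. if descset u \<subseteq> Des K then f u else 0)"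
    if K: "is_comp n K" for K
  proof -
    have pK: "\<forall>x\<in>set K. 0 < x" and sK: "sum_list K = n" using K by (auto simp: is_comp_def)
    show ?thesis unfolding Psi_coeff_def sI U_def[symmetric]
    proof (rule sum.cong[OF refl])
      fix u assume "u \<in> U"
      then have u: "packed u" "length u = n" by (auto simp: U_def)
      show "(SJ_lift K :: 'k wqsym) u = (if descset u \<subseteq> Des K then f u else 0)"
        using u by (simp add: SJ_lift_eq f_def sK bs_descset[OF pK] U_def)
    qed
  qed
  define Ks where "Ks = {K. is_comp n K \<and> coarser K J}"
  have Ks_eq: "Ks = comp_of_set n ` Pow (Des J)"
  proof
    show "Ks \<subseteq> comp_of_set n ` Pow (Des J)"
    proof
      fix K assume "K \<in> Ks"
      then have K: "is_comp n K" "Des K \<subseteq> Des J" by (auto simp: Ks_def coarser_def)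
      then show "K \<in> comp_of_set n ` Pow (Des J)"
        using comp_of_set_Des[OF K(1)] by (intro image_eqI[of K _ "Des K"]) auto
    qed
    show "comp_of_set n ` Pow (Des J) \<subseteq> Ks"
    proof
      fix K assume "K \<in> comp_of_set n ` Pow (Des J)"
      then obtain S where S: "S \<subseteq> Des J" "K = comp_of_set n S" by auto
      have "S \<subseteq> {1..<n}" using S DJ by auto
      then have "is_comp n K \<and> Des K = S" using comp_of_set_props S(2) by blast
      then show "K \<in> Ks" using S(1) by (simp add: Ks_def coarser_def)
    qed
  qed
  have inj: "inj_on (comp_of_set n) (Pow (Des J))"
  proof (rule inj_onI)
    fix S T assume "S \<in> Pow (Des J)" "T \<in> Pow (Des J)" "comp_of_set n S = comp_of_set n T"
    then have "S \<subseteq> {1..<n}" "T \<subseteq> {1..<n}" and st: "comp_of_set n S = comp_of_set n T" using DJ by auto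
    then have "Des (comp_of_set n S) = S" "Des (comp_of_set n T) = T" using comp_of_set_props by blast+
    then show "S = T" using st by metis
  qed
  have len: "length J - length (comp_of_set n S) = card (Des J) - card S" if S: "S \<subseteq> Des J" for S
  proof -
    have S1: "S \<subseteq> {1..<n}" using S DJ by auto
    define K where "K = comp_of_set n S"
    have K: "is_comp n K" "Des K = S" using comp_of_set_props[OF S1] unfolding K_def by blast+
    have pK: "\<forall>x\<in>set K. 0 < x" and pJ: "\<forall>x\<in>set J. 0 < x" using K assms by (auto simp: is_comp_def)
    show ?thesis
    proof (cases "n = 0")
      case True
      then have "K = []" "J = []" using comp_Nil_iff[OF K(1)] comp_Nil_iff[OF assms(2)] by auto
      then show ?thesis using K K_def by simp
    next
      case False
      then have "K \<noteq> []" "J \<noteq> []" using comp_Nil_iff[OF K(1)] comp_Nil_iff[OF assms(2)] by auto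
      then have "length J - length K = card (Des J) - card S"
        using card_Des[OF pK] card_Des[OF pJ] K(2) by (cases K; cases J) auto
      then show ?thesis using K_def by simp
    qed
  qed
  have "R_coeff I J = (\<Sum>K\<in>Ks. (-1) ^ (length J - length K) * Psi_coeff I (SJ_lift K :: 'k wqsym))"
    unfolding R_coeff_def Ks_def sJ by simp
  also have "\<dots> = (\<Sum>S\<in>Pow (Des J). (-1) ^ (length J - length (comp_of_set n S)) *
                    Psi_coeff I (SJ_lift (comp_of_set n S) :: 'k wqsym))"
    unfolding Ks_eq by (simp add: sum.reindex[OF inj])
  also have "\<dots> = (\<Sum>S\<in>Pow (Des J). (-1) ^ (card (Des J) - card S) *
                    (\<Sum>u\<in>U. if descset u \<subseteq> S then f u else 0))"
  proof (rule sum.cong[OF refl])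
    fix S assume "S \<in> Pow (Des J)"
    then have S: "S \<subseteq> Des J" by simp
    have S1: "S \<subseteq> {1..<n}" using S DJ by auto
    show "(-1) ^ (length J - length (comp_of_set n S)) * Psi_coeff I (SJ_lift (comp_of_set n S) :: 'k wqsym) =
          (-1) ^ (card (Des J) - card S) * (\<Sum>u\<in>U. if descset u \<subseteq> S then f u else 0)"
      using step1[of "comp_of_set n S"] comp_of_set_props[OF S1] len[OF S] by simp
  qed
  also have "\<dots> = (\<Sum>S\<in>Pow (Des J). \<Sum>u\<in>U. f u * ((-1) ^ (card (Des J) - card S) * (if descset u \<subseteq> S then 1 else 0)))"
    by (rule sum.cong[OF refl], subst sum_distrib_left, rule sum.cong[OF refl]) (auto simp: mult.commute)
  also have "\<dots> = (\<Sum>u\<in>U. \<Sum>S\<in>Pow (Des J). f u * ((-1) ^ (card (Des J) - card S) * (if descset u \<subseteq> S then 1 else 0)))"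
    by (rule sum.swap)
  also have "\<dots> = (\<Sum>u\<in>U. f u * (if descset u = Des J then 1 else 0))"
    by (simp only: sum_distrib_left[symmetric] mobius_indicator[OF finDJ])
  also have "\<dots> = (\<Sum>u\<in>U. if descset u = Des J then f u else 0)"
    by (rule sum.cong) auto
  also have "\<dots> = sum f {u \<in> U. descset u = Des J}"
    by (simp add: sum.inter_filter[OF finU])
  also have "{u \<in> U. descset u = Des J} = Wprime I J"
  proof
    show "{u \<in> U. descset u = Des J} \<subseteq> Wprime I J"
    proof
      fix u assume "u \<in> {u \<in> U. descset u = Des J}"
      then have u: "packed u" "length u = n" "WC u = I" "descset u = Des J" by (auto simp: U_def)
      have "DC u = J" using u comp_of_set_Des[OF assms(2)] by (simp add: DC_descset)
      then show "u \<in> Wprime I J" using u by (simp add: Wprime_def)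
    qed
    show "Wprime I J \<subseteq> {u \<in> U. descset u = Des J}"
    proof
      fix u assume "u \<in> Wprime I J"
      then have u: "packed u" "WC u = I" "DC u = J" by (auto simp: Wprime_def)
      have ln: "length u = n" using WC_len[OF u(2)] sI by simp
      have "Des (DC u) = descset u"
        using comp_of_set_props[OF descset_sub[of u]] by (simp add: DC_descset)
      then show "u \<in> {u \<in> U. descset u = Des J}" using u ln by (auto simp: U_def)
    qed
  qed
  finally show ?thesis by (simp add: f_def)
qed

end
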